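(* Let $M=(E,\mathcal{I})$ be a matroid with rank function $r$, and let $L\in\mathbb{R}^{E\times E}$ be symmetric ($L^T=L$). Let $x\in B(M)$, and let $\{P_1,\dots,P_k\}$ be the partition of $E$ such that $(Lx)(e)=c_i$ for all $e\in P_i$, with $c_1<c_2<\dots<c_k$. Then the following are equivalent: (i) $(x,x)$ is a symmetric Nash equilibrium; (ii) all bases of $M$ have the same cost with respect to the weights $Lx$; (iii) for every base $B$ of $M$ and every $i$, $|B\cap P_i|=r(P_i)$; (iv) $x(P_i)=r(P_i)$ for all $i\in\{1,\dots,k\}$; (v) for every circuit $C$ of $M$ there exists $i$ with $C\subseteq P_i$.
   Context: $B(M)=\{x\in\mathbb{R}^E: x\ge0,\ x(S)\le r(S)\ \forall S\subseteq E,\ x(E)=r(E)\}$ is the base polytope, $x(S)=\sum_{e\in S}x(e)$. The matroid game: the row player chooses $x\in B(M)$ and wants to minimize $x^TLy$, the column player chooses $y\in B(M)$ and wants to maximize it. $(x,x)$ with $x\in B(M)$ is a symmetric Nash equilibrium if $x^TLz\le x^TLx\le z^TLx$ for all $z\in B(M)$. The cost of a base $B$ w.r.t. weights $w$ is $\sum_{e\in B}w(e)$. *)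

theory Defs
  imports Main "HOL.Real"
begin

definition matroid :: "'a set \<Rightarrow> ('a set \<Rightarrow> bool) \<Rightarrow> bool" where
  "matroid E indep \<longleftrightarrow>
     finite E \<and>
     (\<forall>I. indep I \<longrightarrow> I \<subseteq> E) \<and>
     indep {} \<and>
     (\<forall>I J. indep J \<and> I \<subseteq> J \<longrightarrow> indep I) \<and>
     (\<forall>I J. indep I \<and> indep J \<and> card I < card J \<longrightarrow>
        (\<exists>e \<in> J - I. indep (insert e I)))"

definition rank :: "('a set \<Rightarrow> bool) \<Rightarrow> 'a set \<Rightarrow> nat" where
  "rank indep S = Max {card I | I. I \<subseteq> S \<and> indep I}"

definition is_base :: "'a set \<Rightarrow> ('a set \<Rightarrow> bool) \<Rightarrow> 'a set \<Rightarrow> bool" where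
  "is_base E indep B \<longleftrightarrow> B \<subseteq> E \<and> indep B \<and> (\<forall>e \<in> E - B. \<not> indep (insert e B))"

definition is_circuit :: "'a set \<Rightarrow> ('a set \<Rightarrow> bool) \<Rightarrow> 'a set \<Rightarrow> bool" where
  "is_circuit E indep C \<longleftrightarrow> C \<subseteq> E \<and> \<not> indep C \<and> (\<forall>D. D \<subset> C \<longrightarrow> indep D)"

definition base_polytope :: "'a set \<Rightarrow> ('a set \<Rightarrow> bool) \<Rightarrow> ('a \<Rightarrow> real) set" where
  "base_polytope E indep =
     {x. (\<forall>e \<in> E. x e \<ge> 0) \<and>
         (\<forall>S \<subseteq> E. (\<Sum>e\<in>S. x e) \<le> real (rank indep S)) \<and>
         (\<Sum>e\<in>E. x e) = real (rank indep E)}"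

definition matvec :: "'a set \<Rightarrow> ('a \<Rightarrow> 'a \<Rightarrow> real) \<Rightarrow> ('a \<Rightarrow> real) \<Rightarrow> 'a \<Rightarrow> real" where
  "matvec E L x e = (\<Sum>f\<in>E. L e f * x f)"

definition bilin :: "'a set \<Rightarrow> ('a \<Rightarrow> real) \<Rightarrow> ('a \<Rightarrow> 'a \<Rightarrow> real) \<Rightarrow> ('a \<Rightarrow> real) \<Rightarrow> real" where
  "bilin E x L y = (\<Sum>e\<in>E. \<Sum>f\<in>E. x e * L e f * y f)"

definition symmetric_NE :: "'a set \<Rightarrow> ('a set \<Rightarrow> bool) \<Rightarrow> ('a \<Rightarrow> 'a \<Rightarrow> real) \<Rightarrow> ('a \<Rightarrow> real) \<Rightarrow> bool" where
  "symmetric_NE E indep L x \<longleftrightarrow> x \<in> base_polytope E indep \<and>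
     (\<forall>z \<in> base_polytope E indep. bilin E x L z \<le> bilin E x L x \<and> bilin E x L x \<le> bilin E z L x)"

definition cost :: "('a \<Rightarrow> real) \<Rightarrow> 'a set \<Rightarrow> real" where
  "cost w B = (\<Sum>e\<in>B. w e)"

definition level_classes :: "'a set \<Rightarrow> ('a \<Rightarrow> real) \<Rightarrow> 'a set set" where
  "level_classes E w = (\<lambda>c. {e \<in> E. w e = c}) ` (w ` E)"

end

theory Submission
  imports Defs
begin

lemma mfin: "matroid E indep \<Longrightarrow> finite E" by (simp add: matroid_def)
lemma msub: "matroid E indep \<Longrightarrow> indep I \<Longrightarrow> I \<subseteq> E" by (simp add: matroid_def)
lemma memp: "matroid E indep \<Longrightarrow> indep {}" by (simp add: matroid_def)
lemma mdown: "matroid E indep \<Longrightarrow> indep J \<Longrightarrow> I \<subseteq> J \<Longrightarrow> indep I"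
  unfolding matroid_def by blast
lemma maug: "matroid E indep \<Longrightarrow> indep I \<Longrightarrow> indep J \<Longrightarrow> card I < card J \<Longrightarrow> \<exists>e\<in>J - I. indep (insert e I)"
  unfolding matroid_def by (elim conjE allE impE) auto
lemma ifin: "matroid E indep \<Longrightarrow> indep I \<Longrightarrow> finite I"
  by (rule finite_subset[OF msub mfin])
lemma augment:
  assumes M: "matroid E indep"
  shows "indep I \<Longrightarrow> indep J \<Longrightarrow> card I \<le> card J \<Longrightarrow>
     \<exists>I'. indep I' \<and> I \<subseteq> I' \<and> I' \<subseteq> I \<union> J \<and> card I' = card J"
proof (induction "card J - card I" arbitrary: I)
  case 0
  then show ?case by auto
next
  case (Suc n)
  then have "card I < card J" by auto
  then obtain e where e: "e \<in> J - I" "indep (insert e I)" using maug[OF M] Suc.prems by blast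
  have fI: "finite I" using ifin[OF M Suc.prems(1)] .
  have ci: "card (insert e I) = Suc (card I)" using e fI by simp
  have "n = card J - card (insert e I)" using Suc.hyps(2) ci by simp
  moreover have "card (insert e I) \<le> card J" using ci \<open>card I < card J\<close> by simp
  ultimately obtain I' where "indep I'" "insert e I \<subseteq> I'" "I' \<subseteq> insert e I \<union> J" "card I' = card J"
    using Suc.hyps(1)[of "insert e I"] e Suc.prems by blast
  then show ?case using e by (intro exI[of _ I']) auto
qed

lemma base_card_max:
  assumes M: "matroid E indep" and B: "is_base E indep B" and J: "indep J"
  shows "card J \<le> card B"
proof (rule ccontr)
  assume "\<not> ?thesis"
  then have "card B < card J" by simp
  then obtain e where "e \<in> J - B" "indep (insert e B)"
    using maug[OF M, of B J] B J unfolding is_base_def by blast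
  moreover have "e \<in> E" using msub[OF M J] \<open>e \<in> J - B\<close> by auto
  ultimately show False using B unfolding is_base_def by blast
qed

lemma indep_card_base:
  assumes M: "matroid E indep" and B: "is_base E indep B" and J: "indep J" and c: "card J = card B"
  shows "is_base E indep J"
  unfolding is_base_def
proof (intro conjI ballI)
  show "J \<subseteq> E" using msub[OF M J] .
  show "indep J" by fact
  fix e assume e: "e \<in> E - J"
  show "\<not> indep (insert e J)"
  proof
    assume "indep (insert e J)"
    from base_card_max[OF M B this] show False using e c ifin[OF M J] by simp
  qed
qed

lemma rank_ge:
  assumes M: "matroid E indep" and S: "S \<subseteq> E" and "I \<subseteq> S" "indep I"
  shows "card I \<le> rank indep S"
proof -
  have "finite S" using finite_subset[OF S mfin[OF M]] .
  then have "finite {card I | I. I \<subseteq> S \<and> indep I}"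
    by (rule finite_subset[rotated, OF finite_imageI[OF finite_Pow_iff[THEN iffD2]]]) auto
  then show ?thesis unfolding rank_def using assms by (intro Max_ge) auto
qed

lemma rank_obtain:
  assumes M: "matroid E indep" and S: "S \<subseteq> E"
  shows "\<exists>I. I \<subseteq> S \<and> indep I \<and> card I = rank indep S"
proof -
  have "finite S" using finite_subset[OF S mfin[OF M]] .
  then have f: "finite {card I | I. I \<subseteq> S \<and> indep I}"
    by (rule finite_subset[rotated, OF finite_imageI[OF finite_Pow_iff[THEN iffD2]]]) auto
  have "{card I | I. I \<subseteq> S \<and> indep I} \<noteq> {}" using memp[OF M] by blast
  from Max_in[OF f this] show ?thesis unfolding rank_def by auto
qed

lemma base_exists:
  assumes M: "matroid E indep" shows "\<exists>B. is_base E indep B"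
proof -
  obtain I where I: "I \<subseteq> E" "indep I" "card I = rank indep E" using rank_obtain[OF M] by blast
  have "is_base E indep I" unfolding is_base_def
  proof (intro conjI ballI I(1,2) notI)
    fix e assume e: "e \<in> E - I" "indep (insert e I)"
    have "card (insert e I) \<le> rank indep E" using rank_ge[OF M order_refl, of "insert e I"] e I by auto
    then show False using e I ifin[OF M I(2)] by simp
  qed
  then show ?thesis by blast
qed

lemma rank_E_base:
  assumes M: "matroid E indep" and B: "is_base E indep B"
  shows "rank indep E = card B"
proof -
  obtain I where I: "I \<subseteq> E" "indep I" "card I = rank indep E" using rank_obtain[OF M] by blast
  have "card B \<le> rank indep E" using rank_ge[OF M order_refl] B unfolding is_base_def by blast
  moreover have "card I \<le> card B" using base_card_max[OF M B I(2)] .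
  ultimately show ?thesis using I by simp
qed

lemma circuit_exists:
  assumes M: "matroid E indep"
  shows "D \<subseteq> E \<Longrightarrow> \<not> indep D \<Longrightarrow> \<exists>C \<subseteq> D. is_circuit E indep C"
proof (induction "card D" arbitrary: D rule: less_induct)
  case less
  show ?case
  proof (cases "\<forall>D'. D' \<subset> D \<longrightarrow> indep D'")
    case True then show ?thesis using less.prems unfolding is_circuit_def by blast
  next
    case False
    then obtain D' where D': "D' \<subset> D" "\<not> indep D'" by blast
    have "finite D" using finite_subset[OF less.prems(1) mfin[OF M]] .
    then have "card D' < card D" using D' psubset_card_mono by blast
    then obtain C where "C \<subseteq> D'" "is_circuit E indep C" using less.hyps[of D'] D' less.prems by blast
    then show ?thesis using D' by blast
  qed
qed

lemma exchange:
  assumes M: "matroid E indep" and C: "is_circuit E indep C" and CB: "C \<subseteq> insert e B"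
    and B: "indep B" and f: "f \<in> C"
  shows "indep (insert e B - {f})"
proof -
  have Cd: "\<not> indep C" using C unfolding is_circuit_def by simp
  have Cp: "\<And>D. D \<subset> C \<Longrightarrow> indep D" using C unfolding is_circuit_def by simp
  have eB: "e \<notin> B"
  proof
    assume "e \<in> B" then have "C \<subseteq> B" using CB by auto
    then show False using mdown[OF M B, of C] Cd by simp
  qed
  show ?thesis
  proof (cases "f = e")
    case True then show ?thesis using mdown[OF M B, of "insert e B - {f}"] by auto
  next
    case False
    have fB: "finite B" using ifin[OF M B] .
    have fB2: "f \<in> B" using False f CB by auto
    have eq: "insert e B - {f} = insert e (B - {f})" using False by auto
    have "card (insert e (B - {f})) = Suc (card (B - {f}))" using eB fB by simp
    also have "\<dots> = card B" using card_Suc_Diff1[OF fB fB2] .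
    finally have cK: "card (insert e B - {f}) = card B" using eq by simp
    have "C - {f} \<subset> C" using f by auto
    then have Cf: "indep (C - {f})" using Cp by simp
    have sub: "C - {f} \<subseteq> insert e B - {f}" using CB by auto
    have finK: "finite (insert e B - {f})" using fB by simp
    have "card (C - {f}) \<le> card B" using card_mono[OF finK sub] cK by simp
    then obtain I' where I': "indep I'" "C - {f} \<subseteq> I'" "I' \<subseteq> (C - {f}) \<union> B" "card I' = card B"
      using augment[OF M Cf B] by blast
    show ?thesis
    proof (cases "f \<in> I'")
      case True
      then have "C \<subseteq> I'" using I'(2) by auto
      then show ?thesis using mdown[OF M I'(1), of C] Cd by simp
    next
      case False
      then have s2: "I' \<subseteq> insert e B - {f}" using I'(3) CB by auto
      have "I' = insert e B - {f}" using card_subset_eq[OF finK s2] I'(4) cK by simp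
      then show ?thesis using I'(1) by simp
    qed
  qed
qed

lemma card_swap:
  assumes fB: "finite B" and eB: "e \<notin> B" and fB2: "f \<in> B"
  shows "card (insert e B - {f}) = card B"
proof -
  have eq: "insert e B - {f} = insert e (B - {f})" using eB fB2 by auto
  have "card (insert e (B - {f})) = Suc (card (B - {f}))" using eB fB by simp
  also have "\<dots> = card B" using card_Suc_Diff1[OF fB fB2] .
  finally show ?thesis using eq by simp
qed

lemma sum_le_eq:
  fixes f g :: "'b \<Rightarrow> real"
  assumes "finite A" "\<forall>a\<in>A. f a \<le> g a" "sum f A = sum g A" "a \<in> A"
  shows "f a = g a"
proof -
  have "sum (\<lambda>a. g a - f a) A = 0" using assms by (simp add: sum_subtractf)
  then have "\<forall>a\<in>A. g a - f a = 0" using sum_nonneg_eq_0_iff[of A "\<lambda>a. g a - f a"] assms by auto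
  then show ?thesis using assms by auto
qed

lemma sum_ind: "finite P \<Longrightarrow> (\<Sum>e\<in>P. if e \<in> B then 1 else 0 :: real) = real (card (B \<inter> P))"
  by (simp add: sum.If_cases Int_commute)



theorem theorem9:
  fixes E :: "'a set" and indep :: "'a set \<Rightarrow> bool"
    and L :: "'a \<Rightarrow> 'a \<Rightarrow> real" and x :: "'a \<Rightarrow> real"
  assumes M: "matroid E indep"
    and symL: "\<forall>e \<in> E. \<forall>f \<in> E. L e f = L f e"
    and x: "x \<in> base_polytope E indep"
  defines "w \<equiv> matvec E L x"
  shows "(symmetric_NE E indep L x
            \<longleftrightarrow> (\<forall>B1 B2. is_base E indep B1 \<and> is_base E indep B2 \<longrightarrow> cost w B1 = cost w B2))
       \<and> ((\<forall>B1 B2. is_base E indep B1 \<and> is_base E indep B2 \<longrightarrow> cost w B1 = cost w B2)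
            \<longleftrightarrow> (\<forall>B P. is_base E indep B \<and> P \<in> level_classes E w \<longrightarrow> card (B \<inter> P) = rank indep P))
       \<and> ((\<forall>B P. is_base E indep B \<and> P \<in> level_classes E w \<longrightarrow> card (B \<inter> P) = rank indep P)
            \<longleftrightarrow> (\<forall>P \<in> level_classes E w. (\<Sum>e\<in>P. x e) = real (rank indep P)))
       \<and> ((\<forall>P \<in> level_classes E w. (\<Sum>e\<in>P. x e) = real (rank indep P))
            \<longleftrightarrow> (\<forall>C. is_circuit E indep C \<longrightarrow> (\<exists>P \<in> level_classes E w. C \<subseteq> P)))"
proof -
  define Pc where "Pc c = {e\<in>E. w e = c}" for c
  have fE: "finite E" using mfin[OF M] .
  have PcE: "Pc c \<subseteq> E" for c unfolding Pc_def by auto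
  have lc: "P \<in> level_classes E w \<longleftrightarrow> (\<exists>c\<in>w ` E. P = Pc c)" for P
    unfolding level_classes_def Pc_def by auto
  have lcimg: "level_classes E w = Pc ` (w ` E)" unfolding level_classes_def Pc_def by simp
  have part: "(\<Sum>e\<in>E. g e) = (\<Sum>c\<in>w ` E. sum g (Pc c))" for g :: "'a \<Rightarrow> real"
    unfolding Pc_def using sum.image_gen[OF fE, of g w] .
  have cardpart: "real (card B) = (\<Sum>c\<in>w ` E. real (card (B \<inter> Pc c)))" if "B \<subseteq> E" for B
  proof -
    have "real (card B) = real (card (B \<inter> E))" using that by (simp add: Int_absorb2)
    also have "\<dots> = (\<Sum>e\<in>E. if e \<in> B then 1 else 0 :: real)" using sum_ind[OF fE] by simp
    also have "\<dots> = (\<Sum>c\<in>w ` E. real (card (B \<inter> Pc c)))"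
      unfolding part by (intro sum.cong refl sum_ind finite_subset[OF PcE fE])
    finally show ?thesis .
  qed
  have bil1: "bilin E z L x = (\<Sum>e\<in>E. z e * w e)" for z
    unfolding bilin_def w_def matvec_def
    by (simp add: sum_distrib_left mult.assoc)
  have bil2: "bilin E x L z = (\<Sum>e\<in>E. z e * w e)" for z
  proof -
    have "bilin E x L z = (\<Sum>f\<in>E. \<Sum>e\<in>E. x e * L e f * z f)"
      unfolding bilin_def by (rule sum.swap)
    also have "\<dots> = (\<Sum>f\<in>E. z f * (\<Sum>e\<in>E. L f e * x e))"
      unfolding sum_distrib_left
      by (intro sum.cong refl) (use symL in \<open>auto simp: mult_ac\<close>)
    finally show ?thesis unfolding w_def matvec_def .
  qed
  have ind: "(\<lambda>e. if e \<in> B then 1 else 0) \<in> base_polytope E indep" and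
       indc: "(\<Sum>e\<in>E. (if e \<in> B then 1 else 0) * w e) = cost w B"
    if B: "is_base E indep B" for B
  proof -
    have BE: "B \<subseteq> E" and Bi: "indep B" using B unfolding is_base_def by auto
    have "(\<Sum>e\<in>S. if e \<in> B then 1 else 0 :: real) \<le> real (rank indep S)" if S: "S \<subseteq> E" for S
    proof -
      have "(\<Sum>e\<in>S. if e \<in> B then 1 else 0 :: real) = real (card (B \<inter> S))"
        by (rule sum_ind[OF finite_subset[OF S fE]])
      also have "\<dots> \<le> real (rank indep S)"
        using rank_ge[OF M S, of "B \<inter> S"] mdown[OF M Bi, of "B \<inter> S"] by auto
      finally show ?thesis .
    qed
    moreover have "(\<Sum>e\<in>E. if e \<in> B then 1 else 0 :: real) = real (rank indep E)"
      using sum_ind[OF fE, of B] rank_E_base[OF M B] BE by (simp add: Int_absorb2)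
    ultimately show "(\<lambda>e. if e \<in> B then 1 else 0) \<in> base_polytope E indep"
      unfolding base_polytope_def by auto
    have "(\<Sum>e\<in>E. (if e \<in> B then 1 else 0) * w e) = (\<Sum>e\<in>E. if e \<in> B then w e else 0)"
      by (intro sum.cong) auto
    also have "\<dots> = sum w (E \<inter> B)" by (rule sum.inter_restrict[OF fE, symmetric])
    finally show "(\<Sum>e\<in>E. (if e \<in> B then 1 else 0) * w e) = cost w B"
      unfolding cost_def using BE by (simp add: Int_absorb1)
  qed
  define A1 where "A1 = symmetric_NE E indep L x"
  define A2 where "A2 = (\<forall>B1 B2. is_base E indep B1 \<and> is_base E indep B2 \<longrightarrow> cost w B1 = cost w B2)"
  define A3 where "A3 = (\<forall>B P. is_base E indep B \<and> P \<in> level_classes E w \<longrightarrow> card (B \<inter> P) = rank indep P)"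
  define A4 where "A4 = (\<forall>P \<in> level_classes E w. (\<Sum>e\<in>P. x e) = real (rank indep P))"
  define A5 where "A5 = (\<forall>C. is_circuit E indep C \<longrightarrow> (\<exists>P \<in> level_classes E w. C \<subseteq> P))"
  have A4': "A4 \<longleftrightarrow> (\<forall>c\<in>w ` E. sum x (Pc c) = real (rank indep (Pc c)))"
    unfolding A4_def lcimg by simp
  have A5': "A5 \<longleftrightarrow> (\<forall>C. is_circuit E indep C \<longrightarrow> (\<exists>c\<in>w ` E. C \<subseteq> Pc c))"
    unfolding A5_def lcimg by simp
  have A3': "A3 \<longleftrightarrow> (\<forall>B c. is_base E indep B \<and> c \<in> w ` E \<longrightarrow> card (B \<inter> Pc c) = rank indep (Pc c))"
    unfolding A3_def lc by blast
  have K: "\<forall>c\<in>w ` E. sum z (Pc c) = real (rank indep (Pc c))"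
    if A3 and z: "z \<in> base_polytope E indep" for z
  proof -
    obtain B0 where B0: "is_base E indep B0" using base_exists[OF M] by blast
    have B0E: "B0 \<subseteq> E" using B0 unfolding is_base_def by auto
    have "(\<Sum>c\<in>w ` E. sum z (Pc c)) = sum z E" using part by simp
    also have "\<dots> = real (rank indep E)" using z unfolding base_polytope_def by auto
    also have "\<dots> = real (card B0)" using rank_E_base[OF M B0] by simp
    also have "\<dots> = (\<Sum>c\<in>w ` E. real (rank indep (Pc c)))"
      unfolding cardpart[OF B0E] using \<open>A3\<close> B0 unfolding A3' by simp
    finally have eq: "(\<Sum>c\<in>w ` E. sum z (Pc c)) = (\<Sum>c\<in>w ` E. real (rank indep (Pc c)))" .
    have le: "\<forall>c\<in>w ` E. sum z (Pc c) \<le> real (rank indep (Pc c))"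
      using z PcE unfolding base_polytope_def by auto
    show ?thesis using sum_le_eq[OF finite_imageI[OF fE] le eq] by blast
  qed
  have i2: "A1 \<Longrightarrow> A2"
  proof -
    assume A1
    have "cost w B = bilin E x L x" if B: "is_base E indep B" for B
      using \<open>A1\<close> ind[OF B] indc[OF B] bil1 bil2 unfolding A1_def symmetric_NE_def
      by (metis order_antisym)
    then show A2 unfolding A2_def by simp
  qed
  have i23: "A2 \<Longrightarrow> A3"
  proof -
    assume A2
    have "card (B \<inter> Pc c) = rank indep (Pc c)" if B: "is_base E indep B" and c: "c \<in> w ` E" for B c
    proof (rule ccontr)
      assume ne: "card (B \<inter> Pc c) \<noteq> rank indep (Pc c)"
      have BE: "B \<subseteq> E" and Bi: "indep B" using B unfolding is_base_def by auto
      have fB: "finite B" using ifin[OF M Bi] .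
      have BPi: "indep (B \<inter> Pc c)" using mdown[OF M Bi] by auto
      have "card (B \<inter> Pc c) \<le> rank indep (Pc c)"
        by (metis BPi Int_lower2 rank_ge[OF M PcE])
      with ne have lt: "card (B \<inter> Pc c) < rank indep (Pc c)" by simp
      obtain I where I: "I \<subseteq> Pc c" "indep I" "card I = rank indep (Pc c)" using rank_obtain[OF M PcE] by blast
      obtain e where e: "e \<in> I - (B \<inter> Pc c)" "indep (insert e (B \<inter> Pc c))"
        using maug[OF M BPi I(2)] lt I(3) by auto
      have eP: "e \<in> Pc c" using e I by auto
      have eB: "e \<notin> B" using e eP by auto
      have we: "w e = c" using eP unfolding Pc_def by auto
      have "card (insert e (B \<inter> Pc c)) \<le> card B" using base_card_max[OF M B e(2)] .
      then obtain B' where B': "indep B'" "insert e (B \<inter> Pc c) \<subseteq> B'"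
          "B' \<subseteq> insert e (B \<inter> Pc c) \<union> B" "card B' = card B"
        using augment[OF M e(2) Bi] by blast
      have B'b: "is_base E indep B'" using indep_card_base[OF M B B'(1,4)] .
      have fB': "finite B'" using ifin[OF M B'(1)] .
      have "\<not> B \<subseteq> B'"
      proof
        assume "B \<subseteq> B'"
        then have "B = B'" using card_subset_eq[OF fB'] B'(4) by simp
        then show False using eB B'(2) by auto
      qed
      then obtain f where f: "f \<in> B" "f \<notin> B'" by auto
      have fP: "f \<notin> Pc c" using f B'(2) by auto
      have wf: "w f \<noteq> c" using fP f BE unfolding Pc_def by auto
      have sub: "B' \<subseteq> insert e B - {f}" using B'(3) f by auto
      have "B' = insert e B - {f}"
        using card_subset_eq[OF _ sub] card_swap[OF fB eB f(1)] B'(4) fB by simp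
      then have "cost w B' = w e + (cost w B - w f)"
        unfolding cost_def using fB eB f(1) \<open>e \<notin> B\<close> by (cases "e = f") (auto simp: insert_Diff_if sum_diff1)
      moreover have "cost w B' = cost w B" using \<open>A2\<close> B B'b unfolding A2_def by blast
      ultimately show False using we wf by simp
    qed
    then show A3 unfolding A3' by blast
  qed
  have i31: "A3 \<Longrightarrow> A1"
  proof -
    assume A3
    have val: "(\<Sum>e\<in>E. z e * w e) = (\<Sum>c\<in>w ` E. c * real (rank indep (Pc c)))"
      if z: "z \<in> base_polytope E indep" for z
    proof -
      have "(\<Sum>e\<in>E. z e * w e) = (\<Sum>c\<in>w ` E. \<Sum>e\<in>Pc c. z e * w e)" using part by simp
      also have "\<dots> = (\<Sum>c\<in>w ` E. c * sum z (Pc c))"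
        by (intro sum.cong refl) (auto simp: Pc_def sum_distrib_left mult.commute)
      also have "\<dots> = (\<Sum>c\<in>w ` E. c * real (rank indep (Pc c)))"
        using K[OF \<open>A3\<close> z] by (intro sum.cong refl) (auto simp del: ball_simps)
      finally show ?thesis .
    qed
    show A1 unfolding A1_def symmetric_NE_def using x val[OF x] val bil1 bil2 by simp
  qed
  have i34: "A3 \<Longrightarrow> A4" using K[OF _ x] unfolding A4' by simp
  have i43: "A4 \<Longrightarrow> A3"
  proof -
    assume A4
    have "card (B \<inter> Pc c) = rank indep (Pc c)" if B: "is_base E indep B" and c: "c \<in> w ` E" for B c
    proof -
      have BE: "B \<subseteq> E" and Bi: "indep B" using B unfolding is_base_def by auto
      have le: "\<forall>c\<in>w ` E. real (card (B \<inter> Pc c)) \<le> real (rank indep (Pc c))"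
        using rank_ge[OF M PcE] mdown[OF M Bi] by (simp add: inf_le2 inf_le1)
      have "(\<Sum>c\<in>w ` E. real (card (B \<inter> Pc c))) = real (card B)" using cardpart[OF BE] by simp
      also have "\<dots> = real (rank indep E)" using rank_E_base[OF M B] by simp
      also have "\<dots> = sum x E" using x unfolding base_polytope_def by auto
      also have "\<dots> = (\<Sum>c\<in>w ` E. real (rank indep (Pc c)))"
        unfolding part using \<open>A4\<close> unfolding A4' by (intro sum.cong refl) auto
      finally have "(\<Sum>c\<in>w ` E. real (card (B \<inter> Pc c))) = (\<Sum>c\<in>w ` E. real (rank indep (Pc c)))" .
      from sum_le_eq[OF finite_imageI[OF fE] le this c] show ?thesis by simp
    qed
    then show A3 unfolding A3' by blast
  qed
  have i35: "A3 \<Longrightarrow> A5"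
  proof -
    assume A3
    have "\<exists>c\<in>w ` E. C \<subseteq> Pc c" if C: "is_circuit E indep C" for C
    proof (rule ccontr)
      assume nc: "\<not> ?thesis"
      have CE: "C \<subseteq> E" and Cd: "\<not> indep C" and Cp: "\<And>D. D \<subset> C \<Longrightarrow> indep D"
        using C unfolding is_circuit_def by auto
      have "C \<noteq> {}" using Cd memp[OF M] by auto
      then obtain e where eC: "e \<in> C" by auto
      define c where "c = w e"
      have cE: "c \<in> w ` E" using eC CE c_def by auto
      then obtain f where fC: "f \<in> C" and fP: "f \<notin> Pc c" using nc by auto
      have fe: "f \<noteq> e" using fP eC CE unfolding Pc_def c_def by auto
      have eP: "e \<in> Pc c" using eC CE unfolding Pc_def c_def by auto
      have Ce: "indep (C - {e})" using Cp eC by auto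
      obtain B0 where B0: "is_base E indep B0" using base_exists[OF M] by blast
      have B0i: "indep B0" using B0 unfolding is_base_def by auto
      obtain B where B: "indep B" "C - {e} \<subseteq> B" "card B = card B0"
        using augment[OF M Ce B0i] base_card_max[OF M B0 Ce] by blast
      have Bb: "is_base E indep B" using indep_card_base[OF M B0 B(1,3)] .
      have fB: "finite B" using ifin[OF M B(1)] .
      have eB: "e \<notin> B"
      proof
        assume "e \<in> B" then have "C \<subseteq> B" using B(2) by auto
        then show False using mdown[OF M B(1), of C] Cd by simp
      qed
      have fB2: "f \<in> B" using fC fe B(2) by auto
      have CB: "C \<subseteq> insert e B" using B(2) by auto
      have B'i: "indep (insert e B - {f})" using exchange[OF M C CB B(1) fC] .
      have B'b: "is_base E indep (insert e B - {f})"
        using indep_card_base[OF M Bb B'i card_swap[OF fB eB fB2]] .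
      have "(insert e B - {f}) \<inter> Pc c = insert e (B \<inter> Pc c)" using eP fP fe by auto
      then have "card ((insert e B - {f}) \<inter> Pc c) = Suc (card (B \<inter> Pc c))" using fB eB by simp
      moreover have "card ((insert e B - {f}) \<inter> Pc c) = rank indep (Pc c)"
        using \<open>A3\<close> B'b cE unfolding A3' by blast
      moreover have "card (B \<inter> Pc c) = rank indep (Pc c)"
        using \<open>A3\<close> Bb cE unfolding A3' by blast
      ultimately show False by simp
    qed
    then show A5 unfolding A5' by blast
  qed
  have i53: "A5 \<Longrightarrow> A3"
  proof -
    assume A5
    have "card (B \<inter> Pc c) = rank indep (Pc c)" if B: "is_base E indep B" and c: "c \<in> w ` E" for B c
    proof (rule ccontr)
      assume ne: "card (B \<inter> Pc c) \<noteq> rank indep (Pc c)"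
      have BE: "B \<subseteq> E" and Bi: "indep B" using B unfolding is_base_def by auto
      have BPi: "indep (B \<inter> Pc c)" using mdown[OF M Bi] by auto
      have "card (B \<inter> Pc c) \<le> rank indep (Pc c)"
        by (metis BPi Int_lower2 rank_ge[OF M PcE])
      with ne have lt: "card (B \<inter> Pc c) < rank indep (Pc c)" by simp
      obtain I where I: "I \<subseteq> Pc c" "indep I" "card I = rank indep (Pc c)" using rank_obtain[OF M PcE] by blast
      obtain e where e: "e \<in> I - (B \<inter> Pc c)" "indep (insert e (B \<inter> Pc c))"
        using maug[OF M BPi I(2)] lt I(3) by auto
      have eP: "e \<in> Pc c" using e I by auto
      have eE: "e \<in> E" using eP PcE by auto
      have eB: "e \<notin> B" using e eP by auto
      have "\<not> indep (insert e B)" using B eE eB unfolding is_base_def by auto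
      then obtain C where C: "C \<subseteq> insert e B" "is_circuit E indep C"
        using circuit_exists[OF M, of "insert e B"] BE eE by auto
      have Cd: "\<not> indep C" using C unfolding is_circuit_def by auto
      have "e \<in> C"
      proof (rule ccontr)
        assume "e \<notin> C" then have "C \<subseteq> B" using C by auto
        then show False using mdown[OF M Bi, of C] Cd by simp
      qed
      obtain c' where c': "c' \<in> w ` E" "C \<subseteq> Pc c'" using \<open>A5\<close> C(2) unfolding A5' by blast
      have "c' = c" using \<open>e \<in> C\<close> c' eP unfolding Pc_def by auto
      then have "C \<subseteq> insert e (B \<inter> Pc c)" using C(1) c' by auto
      then show False using mdown[OF M e(2), of C] Cd by simp
    qed
    then show A3 unfolding A3' by blast
  qed
  have "(A1 \<longleftrightarrow> A2) \<and> (A2 \<longleftrightarrow> A3) \<and> (A3 \<longleftrightarrow> A4) \<and> (A4 \<longleftrightarrow> A5)"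
    using i2 i23 i31 i34 i43 i35 i53 by blast
  then show ?thesis unfolding A1_def A2_def A3_def A4_def A5_def .
qed
end
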